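(* Let $R$ be a ring and $I$ an ideal of $R$ with $I\subseteq P(R)$. If $R/I$ is almost Armendariz, then $R$ is almost Armendariz.
   Context: All rings are associative with identity. For a ring $R$, $P(R)$ denotes the prime radical of $R$ (the intersection of all prime ideals of $R$, equivalently the set of strongly nilpotent elements of $R$). A ring $R$ is called almost Armendariz if whenever $f(x)=\sum_{i=0}^m a_ix^i$ and $g(x)=\sum_{j=0}^n b_jx^j\in R[x]$ satisfy $f(x)g(x)=0$, then $a_ib_j\in P(R)$ for all $0\le i\le m$, $0\le j\le n$. *)

theory Defs
  imports "HOL-Algebra.Algebra" "HOL-Algebra.Ideal_Product"
begin

definition nc_prime_ideal :: "('a, 'b) ring_scheme \<Rightarrow> 'a set \<Rightarrow> bool" where
  "nc_prime_ideal R P \<longleftrightarrow> ideal P R \<and> P \<noteq> carrier R \<and>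
     (\<forall>A B. ideal A R \<longrightarrow> ideal B R \<longrightarrow> ideal_prod R A B \<subseteq> P \<longrightarrow> A \<subseteq> P \<or> B \<subseteq> P)"

definition prime_radical :: "('a, 'b) ring_scheme \<Rightarrow> 'a set" where
  "prime_radical R = carrier R \<inter> \<Inter> {P. nc_prime_ideal R P}"

definition almost_armendariz :: "('a, 'b) ring_scheme \<Rightarrow> bool" where
  "almost_armendariz R \<longleftrightarrow>
     (\<forall>f \<in> carrier (UP R). \<forall>g \<in> carrier (UP R).
        f \<otimes>\<^bsub>UP R\<^esub> g = \<zero>\<^bsub>UP R\<^esub> \<longrightarrow>
        (\<forall>i j. coeff (UP R) f i \<otimes>\<^bsub>R\<^esub> coeff (UP R) g j \<in> prime_radical R))"

end

theory Submission
  imports Defs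
begin

lemma (in ring) quot_mem_img:
  assumes I: "ideal I R" and P: "ideal P R" and IP: "I \<subseteq> P"
    and a: "a \<in> carrier R"
  shows "(I +> a \<in> (+>) I ` P) = (a \<in> P)"
proof -
  have sub: "(+>) I ` P \<subseteq> carrier (R Quot I)"
    using ring_ideal_imp_quot_ideal[OF I P] additive_subgroup.a_subset ideal_def by blast
  have "\<Union> ((+>) I ` P) = P" using ideal_incl_iff[OF I P] IP by blast
  thus ?thesis using canonical_proj_vimage_mem_iff[OF I sub a] by simp
qed

lemma (in ring) img_Union:
  assumes I: "ideal I R" and J: "ideal J' (R Quot I)"
  shows "(+>) I ` (\<Union> J') = J'"
proof -
  have subset: "J' \<subseteq> carrier (R Quot I)"
    using J additive_subgroup.a_subset ideal_def by blast
  hence "((+>) I ` (\<Union> J')) \<subseteq> J'"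
    using canonical_proj_vimage_in_carrier canonical_proj_vimage_mem_iff
    by (meson I contra_subsetD image_subsetI)
  moreover have "J' \<subseteq> ((+>) I ` (\<Union> J'))"
  proof
    fix x assume "x \<in> J'"
    then obtain r where r: "r \<in> carrier R" "x = I +> r"
      using subset unfolding FactRing_def A_RCOSETS_def'[of R I] by auto
    hence "r \<in> (\<Union> J')"
      using \<open>x \<in> J'\<close> I canonical_proj_vimage_mem_iff subset by blast
    thus "x \<in> ((+>) I ` (\<Union> J'))" using r(2) by blast
  qed
  ultimately show ?thesis by blast
qed

lemma (in ring) prime_img:
  assumes I: "ideal I R" and P: "nc_prime_ideal R P" and IP: "I \<subseteq> P"
  shows "nc_prime_ideal (R Quot I) ((+>) I ` P)"
proof -
  have Pi: "ideal P R" and Pn: "P \<noteq> carrier R"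
    and Pp: "\<And>A B. ideal A R \<Longrightarrow> ideal B R \<Longrightarrow> ideal_prod R A B \<subseteq> P \<Longrightarrow> A \<subseteq> P \<or> B \<subseteq> P"
    using P unfolding nc_prime_ideal_def by auto
  have K: "\<And>a. a \<in> carrier R \<Longrightarrow> (I +> a \<in> (+>) I ` P) = (a \<in> P)"
    using quot_mem_img[OF I Pi IP] by blast
  have idl: "ideal ((+>) I ` P) (R Quot I)" using ring_ideal_imp_quot_ideal[OF I Pi] .
  have propr: "(+>) I ` P \<noteq> carrier (R Quot I)"
  proof
    assume e: "(+>) I ` P = carrier (R Quot I)"
    have "I +> \<one> \<in> carrier (R Quot I)"
      by (simp add: FactRing_def a_rcosetsI additive_subgroup.a_subset I ideal.axioms(1))
    hence "I +> \<one> \<in> (+>) I ` P" using e by simp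
    hence "\<one> \<in> P" using K[OF one_closed] by simp
    hence "P = carrier R" using Pi ideal.one_imp_carrier by blast
    thus False using Pn by simp
  qed
  have prm: "A' \<subseteq> (+>) I ` P \<or> B' \<subseteq> (+>) I ` P"
    if A': "ideal A' (R Quot I)" and B': "ideal B' (R Quot I)"
      and AB: "ideal_prod (R Quot I) A' B' \<subseteq> (+>) I ` P" for A' B'
  proof -
    have As: "A' \<subseteq> carrier (R Quot I)" and Bs: "B' \<subseteq> carrier (R Quot I)"
      using additive_subgroup.a_subset[OF ideal.axioms(1)[OF A']]
        additive_subgroup.a_subset[OF ideal.axioms(1)[OF B']] by simp_all
    have Ai: "ideal (\<Union>A') R" and Bi: "ideal (\<Union>B') R"
      using quot_ideal_imp_ring_ideal[OF I A'] quot_ideal_imp_ring_ideal[OF I B'] by simp_all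
    have "ideal_prod R (\<Union>A') (\<Union>B') \<subseteq> P"
    proof
      fix s assume "s \<in> ideal_prod R (\<Union>A') (\<Union>B')"
      thus "s \<in> P"
      proof (induct s rule: ideal_prod.induct)
        case (prod a b)
        have ac: "a \<in> carrier R" using ideal.Icarr[OF Ai prod(1)] .
        have bc: "b \<in> carrier R" using ideal.Icarr[OF Bi prod(2)] .
        have "I +> a \<in> A'" using canonical_proj_vimage_mem_iff[OF I As ac] prod by simp
        moreover have "I +> b \<in> B'" using canonical_proj_vimage_mem_iff[OF I Bs bc] prod by simp
        ultimately have "(I +> a) \<otimes>\<^bsub>R Quot I\<^esub> (I +> b) \<in> ideal_prod (R Quot I) A' B'"
          by (rule ideal_prod.prod)
        moreover have "(I +> a) \<otimes>\<^bsub>R Quot I\<^esub> (I +> b) = I +> (a \<otimes> b)"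
          unfolding FactRing_def using ac bc by (simp add: I ideal.rcoset_mult_add)
        ultimately have "I +> (a \<otimes> b) \<in> (+>) I ` P" using AB by (metis subsetD)
        thus ?case using K ac bc by simp
      next
        case (sum s1 s2)
        thus ?case using Pi by (simp add: additive_subgroup.a_closed ideal.axioms(1))
      qed
    qed
    hence "\<Union>A' \<subseteq> P \<or> \<Union>B' \<subseteq> P" using Pp Ai Bi by blast
    moreover have "(+>) I ` (\<Union>A') = A'" "(+>) I ` (\<Union>B') = B'"
      using img_Union[OF I A'] img_Union[OF I B'] by auto
    ultimately show ?thesis by (metis image_mono)
  qed
  show ?thesis unfolding nc_prime_ideal_def using idl propr prm by blast
qed

lemma (in ring) rad_lift:
  assumes I: "ideal I R" and IP: "I \<subseteq> prime_radical R" and x: "x \<in> carrier R"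
    and xq: "I +> x \<in> prime_radical (R Quot I)"
  shows "x \<in> prime_radical R"
  unfolding prime_radical_def
proof (intro IntI InterI)
  show "x \<in> carrier R" by fact
  fix P assume "P \<in> {P. nc_prime_ideal R P}"
  hence P: "nc_prime_ideal R P" by simp
  have IP': "I \<subseteq> P" using IP P unfolding prime_radical_def by blast
  have "nc_prime_ideal (R Quot I) ((+>) I ` P)" using prime_img[OF I P IP'] .
  hence "I +> x \<in> (+>) I ` P" using xq unfolding prime_radical_def by blast
  moreover have "ideal P R" using P unfolding nc_prime_ideal_def by blast
  ultimately show "x \<in> P" using quot_mem_img[OF I _ IP' x] by blast
qed

lemma (in ring) map_up:
  assumes I: "ideal I R" and f: "f \<in> up R"
  shows "(\<lambda>n. I +> f n) \<in> up (R Quot I)"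
proof (rule mem_upI)
  fix n show "I +> f n \<in> carrier (R Quot I)"
    using f by (simp add: FactRing_def a_rcosetsI additive_subgroup.a_subset I ideal.axioms(1) mem_upD)
next
  obtain n where "bound \<zero> n f" using f by blast
  hence "bound \<zero>\<^bsub>R Quot I\<^esub> n (\<lambda>n. I +> f n)"
    unfolding bound_def FactRing_def
    by (simp add: I additive_subgroup.a_subgroup ideal.axioms(1) additive_subgroup.zero_closed a_coset_join2)
  thus "\<exists>n. bound \<zero>\<^bsub>R Quot I\<^esub> n (\<lambda>n. I +> f n)" by blast
qed

lemma (in ring) main_aa:
  assumes I: "ideal I R" and IP: "I \<subseteq> prime_radical R"
    and aa: "almost_armendariz (R Quot I)"
  shows "almost_armendariz R"
  unfolding almost_armendariz_def
proof (intro ballI impI allI)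
  fix f g i j
  assume f: "f \<in> carrier (UP R)" and g: "g \<in> carrier (UP R)"
    and fg: "f \<otimes>\<^bsub>UP R\<^esub> g = \<zero>\<^bsub>UP R\<^esub>"
  let ?Q = "R Quot I"
  interpret Q: ring ?Q using I ideal.quotient_is_ring by blast
  interpret h: ring_hom_ring R ?Q "(+>) I" using I ideal.rcos_ring_hom_ring by blast
  have fu: "f \<in> up R" and gu: "g \<in> up R" using f g by (simp_all add: UP_def)
  define F where "F = (\<lambda>n. I +> f n)"
  define G where "G = (\<lambda>n. I +> g n)"
  have Fu: "F \<in> up ?Q" and Gu: "G \<in> up ?Q" using map_up[OF I fu] map_up[OF I gu] F_def G_def by auto
  have prod0: "(\<Oplus>i \<in> {..n}. f i \<otimes> g (n-i)) = \<zero>" for n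
  proof -
    have "(f \<otimes>\<^bsub>UP R\<^esub> g) n = \<zero>\<^bsub>UP R\<^esub> n" using fg by simp
    thus ?thesis using fu gu by (simp add: UP_def)
  qed
  have "(\<Oplus>\<^bsub>?Q\<^esub>i \<in> {..n}. F i \<otimes>\<^bsub>?Q\<^esub> G (n-i)) = \<zero>\<^bsub>?Q\<^esub>" for n
  proof -
    have "(\<Oplus>\<^bsub>?Q\<^esub>i \<in> {..n}. F i \<otimes>\<^bsub>?Q\<^esub> G (n-i))
        = (\<Oplus>\<^bsub>?Q\<^esub>i \<in> {..n}. I +> (f i \<otimes> g (n-i)))"
      using fu gu unfolding F_def G_def
      by (intro Q.finsum_cong') (auto simp: mem_upD)
    also have "\<dots> = I +> (\<Oplus>i \<in> {..n}. f i \<otimes> g (n-i))"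
    proof -
      have "I +> (\<Oplus>i \<in> {..n}. f i \<otimes> g (n-i)) = finsum ?Q ((+>) I \<circ> (\<lambda>i. f i \<otimes> g (n-i))) {..n}"
        using fu gu by (intro h.hom_finsum) (auto simp: mem_upD)
      thus ?thesis by (simp add: comp_def)
    qed
    also have "\<dots> = \<zero>\<^bsub>?Q\<^esub>" using prod0 by simp
    finally show ?thesis .
  qed
  hence "F \<otimes>\<^bsub>UP ?Q\<^esub> G = \<zero>\<^bsub>UP ?Q\<^esub>"
    using Fu Gu by (simp add: UP_def)
  moreover have "F \<in> carrier (UP ?Q)" "G \<in> carrier (UP ?Q)" using Fu Gu by (simp_all add: UP_def)
  ultimately have "UnivPoly.up_ring.coeff (UP ?Q) F i \<otimes>\<^bsub>?Q\<^esub> UnivPoly.up_ring.coeff (UP ?Q) G j \<in> prime_radical ?Q"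
    using aa unfolding almost_armendariz_def by blast
  hence "F i \<otimes>\<^bsub>?Q\<^esub> G j \<in> prime_radical ?Q" using Fu Gu by (simp add: UP_def)
  hence "I +> (f i \<otimes> g j) \<in> prime_radical ?Q"
    unfolding F_def G_def using fu gu by (simp add: mem_upD)
  hence "f i \<otimes> g j \<in> prime_radical R" using rad_lift[OF I IP] fu gu by (simp add: mem_upD)
  thus "UnivPoly.up_ring.coeff (UP R) f i \<otimes> UnivPoly.up_ring.coeff (UP R) g j \<in> prime_radical R" using fu gu by (simp add: UP_def)
qed

theorem proposition2p4:
  fixes R :: "('a, 'b) ring_scheme" and I :: "'a set"
  assumes "ring R"
    and "ideal I R"
    and "I \<subseteq> prime_radical R"
    and "almost_armendariz (R Quot I)"
  shows "almost_armendariz R"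
  using ring.main_aa[OF assms] .

end
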